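(* If a space $X$ is $\mathbb Q$-selective, then $X$ is $Y$-selective for every countable metrizable space $Y$.
   Context: All spaces are assumed $T_1$. $\mathbb Q$ is the space of rationals with the usual topology. For spaces $Y$, $X$, a map $\varphi:Y\to\mathcal P(X)\setminus\{\emptyset\}$ is lower semicontinuous (l.s.c.) if $\{y:\varphi(y)\cap U\neq\emptyset\}$ is open in $Y$ for every open $U\subseteq X$; a selection is a map $f:Y\to X$ with $f(y)\in\varphi(y)$ for all $y$. $X$ is $Y$-selective if every l.s.c. map from $Y$ to the nonempty closed subsets of $X$ has a continuous selection. *)

theory Defs
  imports "HOL-Analysis.Analysis"
begin

definition lsc_map :: "'b topology \<Rightarrow> 'a topology \<Rightarrow> ('b \<Rightarrow> 'a set) \<Rightarrow> bool" where
  "lsc_map Y X phi \<longleftrightarrow>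
     (\<forall>y\<in>topspace Y. phi y \<noteq> {} \<and> phi y \<subseteq> topspace X) \<and>
     (\<forall>U. openin X U \<longrightarrow> openin Y {y \<in> topspace Y. phi y \<inter> U \<noteq> {}})"

definition selective :: "'b topology \<Rightarrow> 'a topology \<Rightarrow> bool" where
  "selective Y X \<longleftrightarrow>
     (\<forall>phi. lsc_map Y X phi \<and> (\<forall>y\<in>topspace Y. closedin X (phi y)) \<longrightarrow>
        (\<exists>f. continuous_map Y X f \<and> (\<forall>y\<in>topspace Y. f y \<in> phi y)))"

definition rationals_top :: "real topology" where
  "rationals_top = subtopology euclideanreal \<rat>"

end

theory Submission
  imports Defs
begin


definition Bn :: "nat \<Rightarrow> nat" where "Bn j = 4^j * fact (j+2)"

lemma Bn_pos: "Bn j > 0"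
  by (simp add: Bn_def)

lemma Bn_Suc: "Bn (Suc j) = 4*(j+3)*Bn j"
  by (simp add: Bn_def fact_Suc algebra_simps)

lemma Bn_dvd: "i \<le> j \<Longrightarrow> Bn i dvd Bn j"
proof (induction j rule: dec_induct)
  case base then show ?case by simp
next
  case (step n) then show ?case by (simp add: Bn_Suc)
qed

lemma Bn_mono: "i \<le> j \<Longrightarrow> Bn i \<le> Bn j"
  using Bn_dvd Bn_pos dvd_imp_le by blast

lemma Bn_ge: "j + 1 \<le> Bn j"
proof (induction j)
  case 0 then show ?case by (simp add: Bn_def)
next
  case (Suc j)
  have "1 \<le> Bn j" using Bn_pos[of j] by simp
  then have X0: "(4*j+12)*1 \<le> (4*j+12)*Bn j" by (rule mult_le_mono2)
  have X: "4*j+12 \<le> (4*j+12)*Bn j" using X0 by (simp only: mult_1_right)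
  have Y: "Bn (Suc j) = (4*j+12)*Bn j" by (simp add: Bn_Suc algebra_simps)
  have Z: "Suc j + 1 \<le> 4*j+12" by simp
  show ?case unfolding Y using le_trans[OF Z X] by simp
qed

lemma tail_bound_aux:
  "(\<Sum>m\<in>{Suc k..<Suc k + t}. real (m+2)/real (Bn m)) \<le> 1/(3*real (Bn k)) - 1/(3*real (Bn (k+t)))"
proof (induction t)
  case 0 then show ?case by simp
next
  case (Suc t)
  have B: "real (Bn (Suc (k+t))) = 4*(real k+real t+3)*real (Bn (k+t))"
    by (simp add: Bn_Suc)
  have p: "real (Bn (k+t)) > 0" using Bn_pos by simp
  define c where "c = real k + real t + 3"
  define b where "b = real (Bn (k+t))"
  have c1: "c \<ge> 1" unfolding c_def by simp
  have b0: "b > 0" unfolding b_def using p .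
  have e1: "real (Suc k + t + 2) = c" by (simp add: c_def)
  have e2: "real (Bn (Suc k + t)) = 4*c*b" using B by (simp add: c_def b_def)
  have l: "real (Suc k + t + 2)/real (Bn (Suc k + t)) = 1/(4*b)"
    unfolding e1 e2 using c1 b0 by simp
  have e3: "real (Bn (k+t+1)) = 4*c*b" using e2 by simp
  have r: "1/(3*real (Bn (k+t))) - 1/(3*real (Bn (k+t+1))) = (4*c-1)/(12*c*b)"
    unfolding e3 b_def[symmetric] using c1 b0 by (simp add: field_simps)
  have "1/(4*b) \<le> (4*c-1)/(12*c*b)"
  proof -
    have "1/(4*b) = (3*c)/(12*c*b)" using c1 b0 by (simp add: field_simps)
    also have "\<dots> \<le> (4*c-1)/(12*c*b)" using c1 b0 by (intro divide_right_mono) auto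
    finally show ?thesis .
  qed
  then have "real (Suc k + t + 2)/real (Bn (Suc k + t)) \<le> 1/(3*real (Bn (k+t))) - 1/(3*real (Bn (k+t+1)))"
    using l r by simp
  then show ?case using Suc by (simp add: add.commute)
qed

lemma tail_bound:
  assumes "\<And>m. a m \<le> m+2"
  shows "(\<Sum>m\<in>{Suc k..<N}. real (a m)/real (Bn m)) \<le> 1/(3*real (Bn k))"
proof (cases "N \<le> Suc k")
  case True then show ?thesis by simp
next
  case False
  then obtain t where t: "N = Suc k + t" by (metis le_add_diff_inverse nat_le_linear)
  have "(\<Sum>m\<in>{Suc k..<N}. real (a m)/real (Bn m)) \<le> (\<Sum>m\<in>{Suc k..<N}. real (m+2)/real (Bn m))"
  proof (intro sum_mono divide_right_mono)
    fix m
    have "a m \<le> m+2" by (rule assms)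
    then show "real (a m) \<le> real (m+2)" by (simp only: of_nat_le_iff)
  qed auto
  also have "\<dots> \<le> 1/(3*real (Bn k)) - 1/(3*real (Bn (k+t)))" using tail_bound_aux t by simp
  also have "\<dots> \<le> 1/(3*real (Bn k))" using Bn_pos by simp
  finally show ?thesis .
qed

lemma tail_nonneg: "0 \<le> (\<Sum>m\<in>A. real (a m)/real (Bn m))"
  by (intro sum_nonneg) auto

definition Sd :: "(nat \<Rightarrow> nat) \<Rightarrow> nat \<Rightarrow> real" where
  "Sd a N = (\<Sum>m<N. real (a m)/real (Bn m))"

lemma Sd_split: "K \<le> N \<Longrightarrow> Sd a N = Sd a K + (\<Sum>m\<in>{K..<N}. real (a m)/real (Bn m))"
  unfolding Sd_def lessThan_atLeast0 by (simp add: sum.atLeastLessThan_concat)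

lemma Sd_split2: "K < N \<Longrightarrow> Sd a N = Sd a (Suc K) + (\<Sum>m\<in>{Suc K..<N}. real (a m)/real (Bn m))"
  using Sd_split by simp

lemma abs_sub_le: "\<bar>u\<bar> - \<bar>v\<bar> \<le> \<bar>u + v\<bar>" for u v :: real by linarith

lemma sep:
  assumes "\<And>m. a m \<le> m+2" "\<And>m. b m \<le> m+2" "j < N" "\<And>i. i < j \<Longrightarrow> a i = b i" "a j \<noteq> b j"
  shows "2/(3*real (Bn j)) \<le> \<bar>Sd a N - Sd b N\<bar>"
proof -
  have eqj: "Sd a j = Sd b j" unfolding Sd_def using assms(4) by simp
  have sa: "Sd a N = Sd a j + real (a j)/real (Bn j) + (\<Sum>m\<in>{Suc j..<N}. real (a m)/real (Bn m))"
    using Sd_split[of j N a] assms(3) by (simp add: sum.atLeast_Suc_lessThan)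
  have sb: "Sd b N = Sd b j + real (b j)/real (Bn j) + (\<Sum>m\<in>{Suc j..<N}. real (b m)/real (Bn m))"
    using Sd_split[of j N b] assms(3) by (simp add: sum.atLeast_Suc_lessThan)
  define ta where "ta = (\<Sum>m\<in>{Suc j..<N}. real (a m)/real (Bn m))"
  define tb where "tb = (\<Sum>m\<in>{Suc j..<N}. real (b m)/real (Bn m))"
  have ta: "0 \<le> ta" "ta \<le> 1/(3*real (Bn j))" unfolding ta_def using tail_bound[OF assms(1)] tail_nonneg by auto
  have tb: "0 \<le> tb" "tb \<le> 1/(3*real (Bn j))" unfolding tb_def using tail_bound[OF assms(2)] tail_nonneg by auto
  have d1: "1 \<le> \<bar>real (a j) - real (b j)\<bar>" using assms(5) by linarith
  have p: "real (Bn j) > 0" using Bn_pos by simp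
  have "\<bar>Sd a N - Sd b N\<bar> = \<bar>(real (a j) - real (b j))/real (Bn j) + (ta - tb)\<bar>"
    using sa sb eqj unfolding ta_def tb_def by (simp add: diff_divide_distrib)
  moreover have "1/real (Bn j) \<le> \<bar>(real (a j) - real (b j))/real (Bn j)\<bar>"
  proof -
    have "1/real (Bn j) \<le> \<bar>real (a j) - real (b j)\<bar>/real (Bn j)"
      by (rule divide_right_mono[OF d1]) (use p in simp)
    also have "\<dots> = \<bar>(real (a j) - real (b j))/real (Bn j)\<bar>" by (rule abs_div_pos[OF p])
    finally show ?thesis .
  qed
  moreover have "\<bar>ta - tb\<bar> \<le> 1/(3*real (Bn j))" using ta tb by linarith
  moreover have "2/(3*real (Bn j)) = 1/real (Bn j) - 1/(3*real (Bn j))" using p by (simp add: field_simps)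
  moreover have "\<bar>(real (a j) - real (b j))/real (Bn j) + (ta - tb)\<bar> \<ge> \<bar>(real (a j) - real (b j))/real (Bn j)\<bar> - \<bar>ta - tb\<bar>"
    using abs_sub_le by blast
  ultimately show ?thesis by linarith
qed

lemma fin_unique:
  assumes "\<And>m. a m \<le> m+2" "\<And>m. b m \<le> m+2" "Sd a N = Sd b N"
  shows "\<forall>j<N. a j = b j"
proof (rule ccontr)
  assume "\<not> ?thesis"
  then obtain j where j: "j < N" "a j \<noteq> b j" by auto
  define j0 where "j0 = (LEAST j. a j \<noteq> b j)"
  have j01: "a j0 \<noteq> b j0" unfolding j0_def by (rule LeastI[where k=j]) (rule j(2))
  have j02: "j0 \<le> j" unfolding j0_def by (rule Least_le) (rule j(2))
  note j0 = j01 j02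
  have lt: "\<And>i. i < j0 \<Longrightarrow> a i = b i" unfolding j0_def using not_less_Least by blast
  have "j0 < N" using j0 j by simp
  from sep[OF assms(1,2) this lt j0(1)] have "2/(3*real (Bn j0)) \<le> 0" using assms(3) by simp
  then show False using Bn_pos[of j0] by (simp add: field_simps)
qed

lemma sep2:
  assumes "\<And>m. a m \<le> m+2" "\<And>m. b m \<le> m+2" "K < N" "\<exists>j\<le>K. a j \<noteq> b j"
  shows "2/(3*real (Bn K)) \<le> \<bar>Sd a N - Sd b N\<bar>"
proof -
  obtain j where j: "j \<le> K" "a j \<noteq> b j" using assms(4) by auto
  define j0 where "j0 = (LEAST j. a j \<noteq> b j)"
  have j01: "a j0 \<noteq> b j0" unfolding j0_def by (rule LeastI[where k=j]) (rule j(2))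
  have j02: "j0 \<le> j" unfolding j0_def by (rule Least_le) (rule j(2))
  have lt: "\<And>i. i < j0 \<Longrightarrow> a i = b i" unfolding j0_def using not_less_Least by blast
  have "j0 < N" using j02 j assms(3) by simp
  from sep[OF assms(1,2) this lt j01] have "2/(3*real (Bn j0)) \<le> \<bar>Sd a N - Sd b N\<bar>" .
  moreover have "2/(3*real (Bn K)) \<le> 2/(3*real (Bn j0))"
    using Bn_mono[of j0 K] j02 j(1) Bn_pos[of j0] by (simp add: frac_le)
  ultimately show ?thesis by linarith
qed

lemma int_part: "\<exists>n::nat. real (Bn K) * Sd a (Suc K) = real n"
proof -
  have "real (Bn K) * Sd a (Suc K) = (\<Sum>m<Suc K. real (a m * (Bn K div Bn m)))"
    unfolding Sd_def sum_distrib_left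
  proof (intro sum.cong refl)
    fix m assume "m \<in> {..<Suc K}"
    then have "Bn m dvd Bn K" by (simp add: Bn_dvd)
    then show "real (Bn K) * (real (a m) / real (Bn m)) = real (a m * (Bn K div Bn m))"
      using Bn_pos[of m] by (auto simp: real_of_nat_div)
  qed
  then show ?thesis by (metis of_nat_sum)
qed



lemma small_eventually:
  assumes "(c::real) > 0"
  shows "\<exists>N. \<forall>m\<ge>N. 1/(real m + 1) \<le> c"
proof -
  obtain N where N: "1/c < real N" using reals_Archimedean2 by blast
  have "1/(real m + 1) \<le> c" if "m \<ge> N" for m
  proof -
    have "1/c < real m + 1" using N that by linarith
    then have "1 < c * (real m + 1)" using assms by (simp add: field_simps)
    then show ?thesis by (simp add: field_simps)
  qed
  then show ?thesis by blast
qed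

locale cms = Metric_space M d for M :: "'b set" and d +
  fixes e :: "nat \<Rightarrow> 'b" and rho :: "nat \<Rightarrow> real"
  assumes e_range: "range e = M"
    and rho_pos: "\<And>m. 0 < rho m"
    and rho_small: "\<And>m. rho m < 1/(real m + 1)"
    and rho_nd: "\<And>m a b. a \<in> M \<Longrightarrow> b \<in> M \<Longrightarrow> d a b \<noteq> rho m"
begin

lemma e_in: "e n \<in> M" using e_range by auto

definition G :: "nat \<Rightarrow> 'b \<Rightarrow> nat" where
  "G j y = (if \<exists>n\<le>j. d (e n) y < rho j then LEAST n. n \<le> j \<and> d (e n) y < rho j else Suc j)"

lemma G_le: "G j y \<le> Suc j"
proof (cases "\<exists>n\<le>j. d (e n) y < rho j")
  case True
  then obtain n where "n \<le> j \<and> d (e n) y < rho j" by auto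
  then have "(LEAST n. n \<le> j \<and> d (e n) y < rho j) \<le> n" by (rule Least_le)
  then show ?thesis using True \<open>n \<le> j \<and> _\<close> unfolding G_def by simp
next
  case False
  then show ?thesis unfolding G_def by (subst if_not_P) auto
qed

lemma G_ball: assumes "G j y \<le> j" shows "d (e (G j y)) y < rho j"
proof (cases "\<exists>n\<le>j. d (e n) y < rho j")
  case True
  then have "G j y \<le> j \<and> d (e (G j y)) y < rho j" unfolding G_def
    by simp (rule LeastI_ex, blast)
  then show ?thesis by simp
next
  case False
  then have "G j y = Suc j" unfolding G_def by (subst if_not_P) auto
  then show ?thesis using assms by simp
qed

lemma G_cong:
  assumes "\<And>n. n \<le> j \<Longrightarrow> (d (e n) y < rho j \<longleftrightarrow> d (e n) z < rho j)"
  shows "G j y = G j z"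
proof -
  have 1: "(\<lambda>n. n \<le> j \<and> d (e n) y < rho j) = (\<lambda>n. n \<le> j \<and> d (e n) z < rho j)"
    using assms by auto
  have 2: "(\<exists>n\<le>j. d (e n) y < rho j) = (\<exists>n\<le>j. d (e n) z < rho j)" using assms by auto
  show ?thesis unfolding G_def 1 2 ..
qed

definition D :: "nat \<Rightarrow> 'b \<Rightarrow> nat" where
  "D j y = (if j = 0 then Suc (G 0 y) else if G j y = G (j-1) y then 0 else Suc (G j y))"

lemma D_le: "D j y \<le> j + 2"
  using G_le[of j y] G_le[of 0 y] by (simp add: D_def)

lemma G_decode: "0 < j \<Longrightarrow> G j y = (if D j y = 0 then G (j-1) y else D j y - 1)"
  by (simp add: D_def)

lemma G_decode0: "G 0 y = D 0 y - 1"
  by (simp add: D_def)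

lemma decode_eq: "(\<forall>j\<le>K. D j y = D j z) \<Longrightarrow> (\<forall>j\<le>K. G j y = G j z)"
proof (induction K)
  case 0 then show ?case using G_decode0 by simp
next
  case (Suc K)
  then have IH: "\<forall>j\<le>K. G j y = G j z" by simp
  have "G (Suc K) y = G (Suc K) z"
    using G_decode[of "Suc K" y] G_decode[of "Suc K" z] IH Suc.prems by simp
  then show ?case using IH le_Suc_eq by auto
qed

lemma zero_digits:
  assumes "\<And>j. K < j \<Longrightarrow> j \<le> K' \<Longrightarrow> D j y = 0" "K \<le> j" "j \<le> K'"
  shows "G j y = G K y"
  using assms(2,3)
proof (induction j rule: dec_induct)
  case base then show ?case by simp
next
  case (step n)
  have "D (Suc n) y = 0" using assms(1) step by simp
  then show ?case using G_decode[of "Suc n" y] step by simp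
qed

definition idx :: "'b \<Rightarrow> nat" where "idx y = (LEAST k. e k = y)"

lemma idx: assumes "y \<in> M" shows "e (idx y) = y"
proof -
  obtain k where "e k = y" using e_range assms by (metis rangeE)
  then show ?thesis unfolding idx_def by (rule LeastI)
qed

lemma idx_min: "i < idx y \<Longrightarrow> e i \<noteq> y"
  unfolding idx_def using not_less_Least by blast

lemma stab: assumes "y \<in> M" shows "\<exists>Ms\<ge>idx y. \<forall>m\<ge>Ms. G m y = idx y"
proof -
  define k where "k = idx y"
  have "\<forall>i\<in>{..<k}. eventually (\<lambda>m. 1/(real m + 1) \<le> d (e i) y) sequentially"
  proof
    fix i assume "i \<in> {..<k}"
    then have "e i \<noteq> y" using idx_min k_def by auto
    then have "d (e i) y \<noteq> 0" using zero[OF e_in assms] by simp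
    then have "d (e i) y > 0" using nonneg[of "e i" y] by linarith
    then obtain N where "\<forall>m\<ge>N. 1/(real m + 1) \<le> d (e i) y" using small_eventually by blast
    then show "eventually (\<lambda>m. 1/(real m + 1) \<le> d (e i) y) sequentially"
      by (auto simp: eventually_sequentially)
  qed
  then have "eventually (\<lambda>m. \<forall>i\<in>{..<k}. 1/(real m + 1) \<le> d (e i) y) sequentially"
    by (rule eventually_ball_finite[rotated]) simp
  then obtain N where N: "\<forall>m\<ge>N. \<forall>i<k. 1/(real m + 1) \<le> d (e i) y"
    by (auto simp: eventually_sequentially)
  have "G m y = k" if "m \<ge> max N k" for m
  proof -
    have ek: "e k = y" using idx assms k_def by simp
    have k1: "k \<le> m \<and> d (e k) y < rho m" using ek assms rho_pos that by simp
    have "(LEAST n. n \<le> m \<and> d (e n) y < rho m) = k"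
    proof (rule Least_equality)
      show "k \<le> m \<and> d (e k) y < rho m" by (rule k1)
    next
      fix n assume n: "n \<le> m \<and> d (e n) y < rho m"
      show "k \<le> n"
      proof (rule ccontr)
        assume "\<not> k \<le> n"
        then have "1/(real m + 1) \<le> d (e n) y" using N that by simp
        then show False using n rho_small[of m] by simp
      qed
    qed
    then show ?thesis unfolding G_def using k1 by auto
  qed
  then show ?thesis unfolding k_def by (intro exI[of _ "max N (idx y)"]) auto
qed

lemma D_zero_eventually: assumes "y \<in> M" shows "\<exists>N. \<forall>m\<ge>N. D m y = 0"
proof -
  obtain Ms where Ms: "\<forall>m\<ge>Ms. G m y = idx y" using stab assms by blast
  have "D m y = 0" if "m \<ge> Suc Ms" for m
    using Ms[rule_format, of m] Ms[rule_format, of "m-1"] that by (simp add: D_def)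
  then show ?thesis by blast
qed

definition Nst :: "'b \<Rightarrow> nat" where "Nst y = (SOME N. \<forall>m\<ge>N. D m y = 0)"

lemma Nst: "y \<in> M \<Longrightarrow> m \<ge> Nst y \<Longrightarrow> D m y = 0"
  unfolding Nst_def using someI_ex[OF D_zero_eventually] by blast

definition s :: "'b \<Rightarrow> real" where "s y = Sd (\<lambda>m. D m y) (Nst y)"

lemma s_eq: assumes "y \<in> M" "Nst y \<le> N" shows "s y = Sd (\<lambda>m. D m y) N"
proof -
  have "(\<Sum>m\<in>{Nst y..<N}. real (D m y)/real (Bn m)) = 0"
    using Nst[OF assms(1)] by (intro sum.neutral) auto
  then show ?thesis unfolding s_def using Sd_split[OF assms(2), of "\<lambda>m. D m y"] by simp
qed

lemma s_rat: "s y \<in> \<rat>"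
  unfolding s_def Sd_def by (intro Rats_sum Rats_divide) auto

lemma s_tail:
  assumes "y \<in> M"
  shows "0 \<le> s y - Sd (\<lambda>m. D m y) (Suc K)" "s y - Sd (\<lambda>m. D m y) (Suc K) \<le> 1/(3*real (Bn K))"
    "K < j \<Longrightarrow> D j y \<noteq> 0 \<Longrightarrow> 1/real (Bn j) \<le> s y - Sd (\<lambda>m. D m y) (Suc K)"
proof -
  define N where "N = max (Nst y) (Suc (Suc (K + j)))"
  have N: "Nst y \<le> N" "K < N" "j < N" unfolding N_def by auto
  have eq: "s y - Sd (\<lambda>m. D m y) (Suc K) = (\<Sum>m\<in>{Suc K..<N}. real (D m y)/real (Bn m))"
    using s_eq[OF assms N(1)] Sd_split2[OF N(2), of "\<lambda>m. D m y"] by simp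
  show "0 \<le> s y - Sd (\<lambda>m. D m y) (Suc K)" unfolding eq by (rule tail_nonneg)
  show "s y - Sd (\<lambda>m. D m y) (Suc K) \<le> 1/(3*real (Bn K))" unfolding eq
    by (rule tail_bound) (rule D_le)
  assume j: "K < j" "D j y \<noteq> 0"
  have "1/real (Bn j) \<le> real (D j y)/real (Bn j)"
    using j(2) Bn_pos[of j] by (intro divide_right_mono) auto
  also have "\<dots> \<le> (\<Sum>m\<in>{Suc K..<N}. real (D m y)/real (Bn m))"
    by (rule member_le_sum[where f="\<lambda>m. real (D m y)/real (Bn m)"]) (use j N in auto)
  finally show "1/real (Bn j) \<le> s y - Sd (\<lambda>m. D m y) (Suc K)" unfolding eq .
qed

lemma loc_const:
  assumes "y \<in> M"
  shows "\<exists>r>0. \<forall>z\<in>M. d y z < r \<longrightarrow> (\<forall>j\<le>K. G j z = G j y)"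
proof -
  define A where "A = (\<lambda>(i,j). \<bar>d (e i) y - rho j\<bar>) ` ({..K} \<times> {..K})"
  have fin: "finite A" "A \<noteq> {}" unfolding A_def by auto
  have pos: "\<forall>a\<in>A. 0 < a" unfolding A_def using rho_nd e_in assms by auto
  define r where "r = Min A"
  have r0: "r > 0" unfolding r_def using fin pos by simp
  have "\<forall>j\<le>K. G j z = G j y" if z: "z \<in> M" "d y z < r" for z
  proof (intro allI impI)
    fix j assume j: "j \<le> K"
    show "G j z = G j y"
    proof (rule G_cong)
      fix n assume n: "n \<le> j"
      have "\<bar>d (e n) y - rho j\<bar> \<in> A" unfolding A_def using n j by force
      then have le: "r \<le> \<bar>d (e n) y - rho j\<bar>" unfolding r_def using fin by simp
      have t1: "d (e n) z \<le> d (e n) y + d y z" by (rule triangle[OF e_in assms z(1)])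
      have t2: "d (e n) y \<le> d (e n) z + d z y" by (rule triangle[OF e_in z(1) assms])
      have "d z y = d y z" by (rule commute)
      then show "d (e n) z < rho j \<longleftrightarrow> d (e n) y < rho j" using t1 t2 le z(2) by linarith
    qed
  qed
  then show ?thesis using r0 by blast
qed

lemma K0:
  assumes "y \<in> M" "\<epsilon> > 0"
  shows "\<exists>r>0. \<forall>z\<in>M. d y z < r \<longrightarrow> \<bar>s z - s y\<bar> < \<epsilon>"
proof -
  obtain K where K: "1/\<epsilon> < real K" using reals_Archimedean2 by blast
  have "real (K + 1) \<le> real (Bn K)" using Bn_ge[of K] by (simp only: of_nat_le_iff)
  then have "real K + 1 \<le> real (Bn K)" by simp
  then have "1/\<epsilon> < 3 * real (Bn K)" using K by linarith
  then have Kb: "1/(3*real (Bn K)) < \<epsilon>" using assms(2) Bn_pos[of K]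
    by (simp add: field_simps)
  obtain r where r: "r > 0" "\<forall>z\<in>M. d y z < r \<longrightarrow> (\<forall>j\<le>K. G j z = G j y)"
    using loc_const[OF assms(1)] by blast
  have "\<bar>s z - s y\<bar> < \<epsilon>" if z: "z \<in> M" "d y z < r" for z
  proof -
    have Geq: "\<forall>j\<le>K. G j z = G j y" using r z by blast
    have "\<forall>j\<le>K. D j z = D j y"
    proof (intro allI impI)
      fix j assume "j \<le> K"
      then show "D j z = D j y" using Geq by (cases j) (auto simp: D_def)
    qed
    then have P: "Sd (\<lambda>m. D m z) (Suc K) = Sd (\<lambda>m. D m y) (Suc K)"
      unfolding Sd_def by (intro sum.cong) auto
    show ?thesis using s_tail(1,2)[OF z(1), of K] s_tail(1,2)[OF assms(1), of K] P Kb by linarith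
  qed
  then show ?thesis using r by blast
qed

lemma K1:
  assumes "y \<in> M" "r > 0"
  shows "\<exists>\<epsilon>>0. \<forall>z\<in>M. \<bar>s z - s y\<bar> < \<epsilon> \<longrightarrow> d y z < r"
proof -
  obtain Ms where Ms: "Ms \<ge> idx y" "\<forall>m\<ge>Ms. G m y = idx y" using stab assms by blast
  obtain N where N: "\<forall>m\<ge>N. 1/(real m + 1) \<le> r" using small_eventually assms by blast
  define K where "K = max Ms N"
  have K1': "G K y = idx y" using Ms unfolding K_def by simp
  have K2': "idx y \<le> K" using Ms unfolding K_def by simp
  have "1/(real K + 1) \<le> r" using N unfolding K_def by simp
  then have K3': "rho K < r" using rho_small[of K] by linarith
  note K = K1' K2' K3'
  have "d y z < r" if z: "z \<in> M" "\<bar>s z - s y\<bar> < 2/(3*real (Bn K))" for z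
  proof -
    have "\<forall>j\<le>K. D j z = D j y"
    proof (rule ccontr)
      assume "\<not> ?thesis"
      then have ex: "\<exists>j\<le>K. D j z \<noteq> D j y" by auto
      define N' where "N' = max (max (Nst z) (Nst y)) (Suc K)"
      have "2/(3*real (Bn K)) \<le> \<bar>Sd (\<lambda>m. D m z) N' - Sd (\<lambda>m. D m y) N'\<bar>"
        by (rule sep2[OF D_le D_le _ ex]) (simp add: N'_def)
      moreover have "s z = Sd (\<lambda>m. D m z) N'" "s y = Sd (\<lambda>m. D m y) N'"
        using s_eq z(1) assms(1) unfolding N'_def by auto
      ultimately show False using z(2) by simp
    qed
    then have "G K z = G K y" using decode_eq by blast
    then have "d (e (idx y)) z < rho K" using G_ball[of K z] K by simp
    then show ?thesis using idx[OF assms(1)] K(3) by simp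
  qed
  moreover have "2/(3*real (Bn K)) > 0" using Bn_pos[of K] by simp
  ultimately show ?thesis by blast
qed

lemma s_inj: "inj_on s M"
proof (rule inj_onI)
  fix y z assume yz: "y \<in> M" "z \<in> M" "s y = s z"
  have lt: "d y z < r" if r0: "r > 0" for r
  proof -
    obtain \<epsilon> where "\<epsilon> > 0" "\<forall>z\<in>M. \<bar>s z - s y\<bar> < \<epsilon> \<longrightarrow> d y z < r" using K1[OF yz(1) r0] by blast
    then show ?thesis using yz by simp
  qed
  have "\<not> d y z > 0" using lt[of "d y z"] by blast
  then have "d y z = 0" using nonneg[of y z] by linarith
  then show "y = z" using yz zero by blast
qed

lemma claimA:
  assumes z: "z \<in> M" and Q0: "real (Bn K) * q = real_of_int Q0"
    and close: "\<bar>s z - q\<bar> < 1/(3*real (Bn K))"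
  shows "Sd (\<lambda>m. D m z) (Suc K) = q"
proof -
  obtain n where n: "real (Bn K) * Sd (\<lambda>m. D m z) (Suc K) = real n" using int_part by blast
  define t where "t = s z - Sd (\<lambda>m. D m z) (Suc K)"
  have t: "0 \<le> t" "t \<le> 1/(3*real (Bn K))" unfolding t_def using s_tail[OF z] by auto
  have B0: "real (Bn K) > 0" using Bn_pos[of K] by simp
  have bt: "0 \<le> real (Bn K) * t" "real (Bn K) * t \<le> 1/3"
    using t B0 by (auto simp: field_simps)
  have "real (Bn K) * \<bar>s z - q\<bar> < 1/3" using close B0 by (simp add: field_simps)
  then have "\<bar>real (Bn K) * s z - real (Bn K) * q\<bar> < 1/3"
    using B0 by (simp add: abs_mult right_diff_distrib[symmetric])
  moreover have "real (Bn K) * s z = real n + real (Bn K) * t"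
    using n unfolding t_def by (simp add: right_diff_distrib)
  ultimately have X: "\<bar>real n + real (Bn K) * t - real_of_int Q0\<bar> < 1/3" using Q0 by simp
  have h: "real n + real (Bn K) * t - real_of_int Q0 < 1/3 \<and>
    -(real n + real (Bn K) * t - real_of_int Q0) < 1/3" by (rule abs_less_iff[THEN iffD1, OF X])
  have eqr: "real_of_int (int n - Q0) = real n - real_of_int Q0" by simp
  have "real_of_int (int n - Q0) < 1/3" "real_of_int (int n - Q0) > -1"
    unfolding eqr using h bt by linarith+
  then have "int n - Q0 = 0" by linarith
  then have "real (Bn K) * Sd (\<lambda>m. D m z) (Suc K) = real (Bn K) * q"
    using n Q0 by (metis eq_iff_diff_eq_0 of_int_of_nat_eq)
  then show ?thesis using B0 by simp
qed

lemma K2: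
  assumes q: "q \<in> \<rat>" "q \<notin> s ` M"
  shows "\<exists>\<epsilon>>0. \<forall>z\<in>M. \<epsilon> \<le> \<bar>s z - q\<bar>"
proof (rule ccontr)
  assume "\<not> ?thesis"
  then have near: "\<forall>\<epsilon>>0. \<exists>z\<in>M. \<bar>s z - q\<bar> < \<epsilon>" by (auto simp: not_le)
  obtain a b where ab: "b > 0" "q = of_int a / of_int b" using Rats_cases'[OF q(1)] by blast
  define K where "K = nat b"
  have K1: "1 \<le> K" unfolding K_def using ab(1) by simp
  have "K dvd fact (K+2)" by (rule dvd_fact) (use K1 in auto)
  then have "K dvd Bn K" unfolding Bn_def by (simp add: dvd_mult)
  then have "int K dvd int (Bn K)" by (simp only: int_dvd_int_iff)
  moreover have "int K = b" unfolding K_def using ab(1) by simp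
  ultimately have "b dvd int (Bn K)" by simp
  then obtain c where c: "int (Bn K) = b * c" by (auto elim: dvdE)
  define Q0 where "Q0 = a * c"
  have Q0: "real (Bn K) * q = real_of_int Q0"
  proof -
    have "real (Bn K) = real_of_int b * real_of_int c" using c by (metis of_int_mult of_int_of_nat_eq)
    then show ?thesis unfolding Q0_def ab(2) using ab(1) by simp
  qed
  have B0: "real (Bn K) > 0" using Bn_pos[of K] by simp
  obtain z0 where z0: "z0 \<in> M" "\<bar>s z0 - q\<bar> < 1/(3*real (Bn K))" using near[rule_format, of "1/(3*real (Bn K))"] B0 by auto
  define n0 where "n0 = G K z0"
  define y where "y = e n0"
  have y: "y \<in> M" unfolding y_def by (rule e_in)
  define \<eta> where "\<eta> = \<bar>q - s y\<bar>"
  have "q \<noteq> s y" using q(2) y by auto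
  then have eta: "\<eta> > 0" unfolding \<eta>_def by simp
  obtain r where r: "r > 0" "\<forall>z\<in>M. d y z < r \<longrightarrow> \<bar>s z - s y\<bar> < \<eta>/2"
    using K0[OF y, of "\<eta>/2"] eta by auto
  obtain N where N: "\<forall>m\<ge>N. 1/(real m + 1) \<le> r" using small_eventually r(1) by blast
  define K' where "K' = max N (Suc K)"
  have K'1: "Suc K \<le> K'" unfolding K'_def by simp
  have "1/(real K' + 1) \<le> r" using N unfolding K'_def by simp
  then have K'2: "rho K' < r" using rho_small[of K'] by linarith
  have B'0: "real (Bn K') > 0" using Bn_pos[of K'] by simp
  define \<epsilon> where "\<epsilon> = min (\<eta>/2) (min (1/(3*real (Bn K))) (1/real (Bn K')))"
  have "\<epsilon> > 0" unfolding \<epsilon>_def using eta B0 B'0 by simp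
  then obtain z where z: "z \<in> M" "\<bar>s z - q\<bar> < \<epsilon>" using near by blast
  have zA: "Sd (\<lambda>m. D m z) (Suc K) = q" using claimA[OF z(1) Q0] z(2) unfolding \<epsilon>_def by simp
  have z0A: "Sd (\<lambda>m. D m z0) (Suc K) = q" using claimA[OF z0(1) Q0 z0(2)] .
  have "\<forall>j<Suc K. D j z = D j z0" using fin_unique[of "\<lambda>m. D m z" "\<lambda>m. D m z0" "Suc K", OF D_le D_le] zA z0A by simp
  then have "\<forall>j\<le>K. D j z = D j z0" using less_Suc_eq_le by blast
  then have "\<forall>j\<le>K. G j z = G j z0" by (rule decode_eq)
  then have GK: "G K z = n0" unfolding n0_def by simp
  have tz: "s z - Sd (\<lambda>m. D m z) (Suc K) < 1/real (Bn K')"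
  proof -
    have "\<bar>s z - q\<bar> < 1/real (Bn K')" using z(2) unfolding \<epsilon>_def by simp
    then show ?thesis using zA by linarith
  qed
  have zd: "D j z = 0" if "K < j" "j \<le> K'" for j
  proof (rule ccontr)
    assume "D j z \<noteq> 0"
    then have "1/real (Bn j) \<le> s z - Sd (\<lambda>m. D m z) (Suc K)" using s_tail(3)[OF z(1) that(1)] by simp
    moreover have "1/real (Bn K') \<le> 1/real (Bn j)"
      using Bn_mono[OF that(2)] Bn_pos[of j] by (simp add: frac_le)
    ultimately show False using tz by linarith
  qed
  have "G K' z = G K z" by (rule zero_digits[OF zd]) (use K'1 in auto)
  then have GK': "G K' z = n0" using GK by simp
  have "n0 \<le> Suc K" unfolding n0_def by (rule G_le)
  then have "G K' z \<le> K'" using GK' K'1 by simp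
  then have "d y z < rho K'" using G_ball[of K' z] GK' unfolding y_def by simp
  then have "\<bar>s z - s y\<bar> < \<eta>/2" using r K'2 z(1) by simp
  moreover have "\<bar>s z - q\<bar> < \<eta>/2" using z(2) unfolding \<epsilon>_def by simp
  ultimately have "\<bar>q - s y\<bar> < \<eta>" by linarith
  then show False unfolding \<eta>_def by simp
qed

lemma s_cont: "continuous_map mtopology rationals_top s"
proof -
  have "continuous_map mtopology euclideanreal s"
    unfolding continuous_map
  proof (intro conjI allI impI)
    show "s ` topspace mtopology \<subseteq> topspace euclideanreal" by simp
    fix U :: "real set" assume "openin euclideanreal U"
    then have U: "open U" by simp
    show "openin mtopology {x \<in> topspace mtopology. s x \<in> U}"
      unfolding openin_mtopology
    proof (intro conjI allI impI)
      show "{x \<in> topspace mtopology. s x \<in> U} \<subseteq> M" by auto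
      fix y assume y: "y \<in> {x \<in> topspace mtopology. s x \<in> U}"
      then have yM: "y \<in> M" and sy: "s y \<in> U" by auto
      obtain \<epsilon> where \<epsilon>: "\<epsilon> > 0" "\<forall>x'. dist x' (s y) < \<epsilon> \<longrightarrow> x' \<in> U"
        using U sy unfolding open_dist by blast
      obtain r where r: "r > 0" "\<forall>z\<in>M. d y z < r \<longrightarrow> \<bar>s z - s y\<bar> < \<epsilon>"
        using K0[OF yM \<epsilon>(1)] by blast
      have "mball y r \<subseteq> {x \<in> topspace mtopology. s x \<in> U}"
      proof
        fix z assume "z \<in> mball y r"
        then have z: "z \<in> M" "d y z < r" by auto
        then have "dist (s z) (s y) < \<epsilon>" using r by (simp add: dist_real_def)
        then show "z \<in> {x \<in> topspace mtopology. s x \<in> U}" using \<epsilon> z by simp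
      qed
      then show "\<exists>r>0. mball y r \<subseteq> {x \<in> topspace mtopology. s x \<in> U}" using r(1) by blast
    qed
  qed
  then show ?thesis unfolding rationals_top_def continuous_map_in_subtopology using s_rat by auto
qed

lemma sel:
  assumes QX: "selective rationals_top X" and ne: "M \<noteq> {}"
  shows "selective mtopology X"
  unfolding selective_def
proof (intro allI impI)
  fix phi assume A: "lsc_map mtopology X phi \<and> (\<forall>y\<in>topspace mtopology. closedin X (phi y))"
  then have lsc: "\<forall>y\<in>M. phi y \<noteq> {} \<and> phi y \<subseteq> topspace X"
    and op: "\<And>U. openin X U \<Longrightarrow> openin mtopology {y\<in>M. phi y \<inter> U \<noteq> {}}"
    and cl: "\<forall>y\<in>M. closedin X (phi y)" unfolding lsc_map_def by auto
  obtain y0 where "y0 \<in> M" using ne by auto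
  then have TX: "topspace X \<noteq> {}" using lsc by blast
  define psi where "psi q = (if q \<in> s ` M then phi (inv_into M s q) else topspace X)" for q
  have psi_s: "psi (s y) = phi y" if "y \<in> M" for y using that s_inj by (simp add: psi_def)
  have tq: "topspace rationals_top = \<rat>" unfolding rationals_top_def by simp
  have L: "lsc_map rationals_top X psi"
    unfolding lsc_map_def tq
  proof (intro conjI ballI allI impI)
    fix q :: real assume "q \<in> \<rat>"
    show "psi q \<noteq> {}"
    proof (cases "q \<in> s ` M")
      case True then obtain y where "y \<in> M" "q = s y" by auto
      then show ?thesis using psi_s lsc by auto
    qed (use TX in \<open>simp add: psi_def\<close>)
    show "psi q \<subseteq> topspace X"
    proof (cases "q \<in> s ` M")
      case True then obtain y where "y \<in> M" "q = s y" by auto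
      then show ?thesis using psi_s lsc by auto
    qed (simp add: psi_def)
  next
    fix U assume U: "openin X U"
    show "openin rationals_top {q \<in> \<rat>. psi q \<inter> U \<noteq> {}}"
      unfolding rationals_top_def openin_euclidean_subtopology_iff
    proof (intro conjI ballI)
      show "{q \<in> \<rat>. psi q \<inter> U \<noteq> {}} \<subseteq> \<rat>" by auto
      fix q assume q: "q \<in> {q \<in> \<rat>. psi q \<inter> U \<noteq> {}}"
      show "\<exists>e>0. \<forall>x'\<in>\<rat>. dist x' q < e \<longrightarrow> x' \<in> {q \<in> \<rat>. psi q \<inter> U \<noteq> {}}"
      proof (cases "q \<in> s ` M")
        case True
        then obtain y where y: "y \<in> M" "q = s y" by auto
        have pyU: "phi y \<inter> U \<noteq> {}" using q y psi_s by auto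
        then have yV: "y \<in> {y\<in>M. phi y \<inter> U \<noteq> {}}" using y by auto
        obtain r where r: "r > 0" "mball y r \<subseteq> {y\<in>M. phi y \<inter> U \<noteq> {}}"
          using op[OF U] yV unfolding openin_mtopology by blast
        obtain \<epsilon> where \<epsilon>: "\<epsilon> > 0" "\<forall>z\<in>M. \<bar>s z - s y\<bar> < \<epsilon> \<longrightarrow> d y z < r"
          using K1[OF y(1) r(1)] by blast
        have UX: "topspace X \<inter> U \<noteq> {}" using pyU lsc y(1) by blast
        have "\<forall>x'\<in>\<rat>. dist x' q < \<epsilon> \<longrightarrow> x' \<in> {q \<in> \<rat>. psi q \<inter> U \<noteq> {}}"
        proof (intro ballI impI)
          fix x' assume x': "x' \<in> \<rat>" "dist x' q < \<epsilon>"
          show "x' \<in> {q \<in> \<rat>. psi q \<inter> U \<noteq> {}}"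
          proof (cases "x' \<in> s ` M")
            case True then obtain z where z: "z \<in> M" "x' = s z" by auto
            then have "d y z < r" using \<epsilon> x' y by (simp add: dist_real_def)
            then have "z \<in> mball y r" using y z by simp
            then have "phi z \<inter> U \<noteq> {}" using r by auto
            then show ?thesis using x' z psi_s by simp
          next
            case False then show ?thesis using x' UX by (simp add: psi_def)
          qed
        qed
        then show ?thesis using \<epsilon>(1) by blast
      next
        case False
        then have "psi q = topspace X" by (simp add: psi_def)
        then have UX: "topspace X \<inter> U \<noteq> {}" using q by simp
        obtain \<epsilon> where \<epsilon>: "\<epsilon> > 0" "\<forall>z\<in>M. \<epsilon> \<le> \<bar>s z - q\<bar>" using K2[of q] q False by blast
        have "\<forall>x'\<in>\<rat>. dist x' q < \<epsilon> \<longrightarrow> x' \<in> {q \<in> \<rat>. psi q \<inter> U \<noteq> {}}"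
        proof (intro ballI impI)
          fix x' assume x': "x' \<in> \<rat>" "dist x' q < \<epsilon>"
          have "x' \<notin> s ` M" using \<epsilon> x' by (force simp: dist_real_def)
          then show "x' \<in> {q \<in> \<rat>. psi q \<inter> U \<noteq> {}}" using x' UX by (simp add: psi_def)
        qed
        then show ?thesis using \<epsilon>(1) by blast
      qed
    qed
  qed
  have C: "\<forall>q\<in>topspace rationals_top. closedin X (psi q)"
  proof
    fix q assume "q \<in> topspace rationals_top"
    show "closedin X (psi q)"
    proof (cases "q \<in> s ` M")
      case True then obtain y where "y \<in> M" "q = s y" by auto
      then show ?thesis using psi_s cl by auto
    qed (simp add: psi_def)
  qed
  obtain g where g: "continuous_map rationals_top X g" "\<forall>q\<in>topspace rationals_top. g q \<in> psi q"
    using QX L C unfolding selective_def by blast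
  have "continuous_map mtopology X (g \<circ> s)" by (rule continuous_map_compose[OF s_cont g(1)])
  moreover have "\<forall>y\<in>topspace mtopology. (g \<circ> s) y \<in> phi y"
    using g(2) psi_s s_rat unfolding tq by auto
  ultimately show "\<exists>f. continuous_map mtopology X f \<and> (\<forall>y\<in>topspace mtopology. f y \<in> phi y)" by blast
qed

end


theorem mainTheorem19:
  fixes X :: "'a topology"
  assumes "t1_space X"
    and "selective rationals_top X"
  shows "\<forall>Y :: 'b topology. countable (topspace Y) \<and> metrizable_space Y \<longrightarrow> selective Y X"
proof (intro allI impI)
  fix Y :: "'b topology" assume Yc: "countable (topspace Y) \<and> metrizable_space Y"
  obtain M d where Md: "Metric_space M d" "Y = Metric_space.mtopology M d"
    using Yc unfolding metrizable_space_def by blast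
  have tY: "topspace Y = M" using Metric_space.topspace_mtopology[OF Md(1)] Md(2) by simp
  show "selective Y X"
  proof (cases "M = {}")
    case True
    show ?thesis unfolding selective_def
    proof (intro allI impI)
      fix phi
      have "continuous_map Y X (\<lambda>_. undefined)" unfolding continuous_map using tY True by simp
      then show "\<exists>f. continuous_map Y X f \<and> (\<forall>y\<in>topspace Y. f y \<in> phi y)" using tY True by auto
    qed
  next
    case False
    have cM: "countable M" using Yc tY by simp
    define Dist where "Dist = (\<lambda>(a,b). d a b) ` (M \<times> M)"
    have cD: "countable Dist" unfolding Dist_def using cM by simp
    have "\<exists>\<rho>. 0 < \<rho> \<and> \<rho> < 1/(real m + 1) \<and> \<rho> \<notin> Dist" for m :: nat
    proof -
      have "uncountable {0<..<1/(real m + 1)}" by (simp add: uncountable_open_interval)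
      then have "\<not> {0<..<1/(real m + 1)} \<subseteq> Dist" using cD countable_subset by blast
      then show ?thesis by auto
    qed
    then obtain rho where rho: "\<And>m. 0 < rho m \<and> rho m < 1/(real m + 1) \<and> rho m \<notin> Dist"
      by metis
    define e where "e = from_nat_into M"
    interpret C: cms M d e rho
    proof (rule cms.intro[OF Md(1)], unfold_locales)
      show "range e = M" unfolding e_def using False cM by simp
      show "\<And>m. 0 < rho m" using rho by blast
      show "\<And>m. rho m < 1/(real m + 1)" using rho by blast
      show "\<And>m a b. a \<in> M \<Longrightarrow> b \<in> M \<Longrightarrow> d a b \<noteq> rho m"
        using rho unfolding Dist_def by force
    qed
    have "selective (Metric_space.mtopology M d) X" by (rule C.sel[OF assms(2) False])
    then show ?thesis using Md(2) by simp
  qed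
qed

end
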